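(* For each of the three pairs of families (Demazure atoms, monomial slide polynomials), (Demazure atoms, fundamental slide polynomials), (fundamental particles, monomial slide polynomials), neither family expands positively in the other; that is, in each pair, some element of the first family is not a nonnegative linear combination of elements of the second, and some element of the second is not a nonnegative linear combination of elements of the first.
   Context: Weak composition of length $n$: sequence of $n$ nonnegative integers; $\mathrm{flat}(a)$ deletes zero parts; $b\ge a$ means $b_1+\cdots+b_i\ge a_1+\cdots+a_i$ for all $i$. $\mathfrak{M}_a=\sum x^b$ over $b\ge a$ (length $n$) with $\mathrm{flat}(b)=\mathrm{flat}(a)$; $\mathfrak{F}_a=\sum x^b$ over $b\ge a$ with $\mathrm{flat}(b)$ refining $\mathrm{flat}(a)$. Fundamental particle: a local move replaces consecutive entries $(0,k)$ at positions $p,p+1$ by $(i,j)$, $i+j=k$, $i,j\ge0$; fixed slides of $a$ are obtained by sequences of such moves with $j>0$ required whenever $a_{p+1}\neq0$; $\mathfrak{L}_a=\sum x^b$ over the set of fixed slides $b$. Demazure atom: in $D(a)$ ($a_i$ left-justified boxes in row $i$, row 1 lowest), triples (rows $r<s$) are Type A: $\gamma=(r,c),\alpha=(r,c+1),\beta=(s,c+1)$ with $a_r\ge a_s$, or Type B: $\gamma=(s,c),\alpha=(s,c+1),\beta=(r,c)$ with $a_s>a_r$; inversion triple: $\beta>\gamma\ge\alpha$ or $\gamma\ge\alpha>\beta$; $\mathcal{A}_a=\sum_S\prod_i x_i^{\#\{\text{entries } i\}}$ over fillings $S$ of $D(a)$ with positive integers, rows weakly decreasing left to right, distinct column entries, all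 triples inversion triples, and first-column entry of each nonempty row $i$ equal to $i$. Each family (for fixed length $n$) is a basis of $\mathbb{Z}[x_1,\ldots,x_n]$. *)

theory Defs
  imports Main
begin

(* Weak compositions are lists of naturals.  A polynomial in Z[x_1..x_n] is represented
   by its coefficient function: exponent vector (nat list of length n) => int coefficient. *)

definition flat :: "nat list \<Rightarrow> nat list" where
  "flat a = filter (\<lambda>x. x \<noteq> 0) a"

definition dom_ge :: "nat list \<Rightarrow> nat list \<Rightarrow> bool" where
  "dom_ge b a \<longleftrightarrow> length b = length a \<and>
     (\<forall>i\<le>length a. sum_list (take i b) \<ge> sum_list (take i a))"

definition refines :: "nat list \<Rightarrow> nat list \<Rightarrow> bool" where
  "refines c d \<longleftrightarrow> (\<exists>cs. c = concat cs \<and> map sum_list cs = d \<and> (\<forall>x\<in>set cs. x \<noteq> []))"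

definition monoslide :: "nat list \<Rightarrow> nat list \<Rightarrow> int" where
  "monoslide a b = (if dom_ge b a \<and> flat b = flat a then 1 else 0)"

definition fundslide :: "nat list \<Rightarrow> nat list \<Rightarrow> int" where
  "fundslide a b = (if dom_ge b a \<and> refines (flat b) (flat a) then 1 else 0)"

(* fixed slides of a: positions are 0-indexed, p and p+1 consecutive *)
inductive_set fixed_slides :: "nat list \<Rightarrow> nat list set" for a where
  refl: "a \<in> fixed_slides a"
| move: "\<lbrakk> b \<in> fixed_slides a; Suc p < length b; b ! p = 0; b ! Suc p = i + j;
          a ! Suc p \<noteq> 0 \<longrightarrow> j > 0 \<rbrakk>
        \<Longrightarrow> b[p := i, Suc p := j] \<in> fixed_slides a"

definition particle :: "nat list \<Rightarrow> nat list \<Rightarrow> int" where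
  "particle a b = (if b \<in> fixed_slides a then 1 else 0)"

(* Demazure atoms.  Rows r = 1..n (row 1 lowest), columns c = 1..a_r; a_r = a ! (r-1). *)
definition diag :: "nat list \<Rightarrow> (nat \<times> nat) set" where
  "diag a = {(r, c). 1 \<le> r \<and> r \<le> length a \<and> 1 \<le> c \<and> c \<le> a ! (r - 1)}"

definition inv_triple :: "nat \<Rightarrow> nat \<Rightarrow> nat \<Rightarrow> bool" where
  "inv_triple g al be \<longleftrightarrow> (be > g \<and> g \<ge> al) \<or> (g \<ge> al \<and> al > be)"

definition atom_filling :: "nat list \<Rightarrow> (nat \<times> nat \<Rightarrow> nat) \<Rightarrow> bool" where
  "atom_filling a S \<longleftrightarrow>
     (\<forall>x. x \<notin> diag a \<longrightarrow> S x = 0) \<and>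
     (\<forall>x\<in>diag a. S x \<ge> 1) \<and>
     (\<forall>r c. (r, c) \<in> diag a \<and> (r, Suc c) \<in> diag a \<longrightarrow> S (r, c) \<ge> S (r, Suc c)) \<and>
     (\<forall>r s c. (r, c) \<in> diag a \<and> (s, c) \<in> diag a \<and> r \<noteq> s \<longrightarrow> S (r, c) \<noteq> S (s, c)) \<and>
     \<comment> \<open>Type A triples\<close>
     (\<forall>r s c. r < s \<and> a ! (r - 1) \<ge> a ! (s - 1) \<and>
        (r, c) \<in> diag a \<and> (r, Suc c) \<in> diag a \<and> (s, Suc c) \<in> diag a \<longrightarrow>
        inv_triple (S (r, c)) (S (r, Suc c)) (S (s, Suc c))) \<and>
     \<comment> \<open>Type B triples\<close>
     (\<forall>r s c. r < s \<and> a ! (s - 1) > a ! (r - 1) \<and>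
        (s, c) \<in> diag a \<and> (s, Suc c) \<in> diag a \<and> (r, c) \<in> diag a \<longrightarrow>
        inv_triple (S (s, c)) (S (s, Suc c)) (S (r, c))) \<and>
     (\<forall>i. 1 \<le> i \<and> i \<le> length a \<and> a ! (i - 1) \<noteq> 0 \<longrightarrow> S (i, 1) = i)"

definition atom :: "nat list \<Rightarrow> nat list \<Rightarrow> int" where
  "atom a b = (if length b = length a then
      int (card {S. atom_filling a S \<and>
                   (\<forall>i. 1 \<le> i \<and> i \<le> length a \<longrightarrow>
                        card {x \<in> diag a. S x = i} = b ! (i - 1))})
    else 0)"

definition pos_comb :: "nat \<Rightarrow> (nat list \<Rightarrow> nat list \<Rightarrow> int) \<Rightarrow> (nat list \<Rightarrow> int) \<Rightarrow> bool" where
  "pos_comb n P f \<longleftrightarrow> (\<exists>c :: nat list \<Rightarrow> int.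
      finite {a. c a \<noteq> 0} \<and> (\<forall>a. c a \<ge> 0) \<and> (\<forall>a. c a \<noteq> 0 \<longrightarrow> length a = n) \<and>
      (\<forall>b. f b = (\<Sum>a\<in>{a. c a \<noteq> 0}. c a * P a b)))"

definition mutually_nonpositive :: "(nat list \<Rightarrow> nat list \<Rightarrow> int) \<Rightarrow> (nat list \<Rightarrow> nat list \<Rightarrow> int) \<Rightarrow> bool" where
  "mutually_nonpositive X Y \<longleftrightarrow>
     (\<exists>a. \<not> pos_comb (length a) Y (X a)) \<and> (\<exists>a. \<not> pos_comb (length a) X (Y a))"

end

theory Submission
  imports Defs
begin

lemma pc_unfold:
  assumes "pos_comb n P f"
  obtains c where "finite {a. c a \<noteq> 0}" "\<forall>a. c a \<ge> 0" "\<forall>a. c a \<noteq> 0 \<longrightarrow> length a = n"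
    "\<forall>b. f b = (\<Sum>a\<in>{a. c a \<noteq> 0}. c a * P a b)"
  using assms unfolding pos_comb_def by blast

lemma pc_zero:
  fixes P :: "nat list \<Rightarrow> nat list \<Rightarrow> int" and c :: "nat list \<Rightarrow> int"
  assumes nn: "\<And>a b. P a b \<ge> 0" and fin: "finite {a. c a \<noteq> 0}" and cn: "\<forall>a. c a \<ge> 0"
    and fb: "f b = (\<Sum>a\<in>{a. c a \<noteq> 0}. c a * P a b)" and z: "f b = 0" and ca: "c a \<noteq> 0"
  shows "P a b = 0"
proof -
  have "\<forall>x\<in>{a. c a \<noteq> 0}. c x * P x b = 0"
    using sum_nonneg_eq_0_iff[OF fin, of "\<lambda>x. c x * P x b"] fb z cn nn by auto
  then have "c a * P a b = 0" using ca by auto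
  then show ?thesis using ca by simp
qed

lemma pc_nz:
  fixes P :: "nat list \<Rightarrow> nat list \<Rightarrow> int" and c :: "nat list \<Rightarrow> int"
  assumes fb: "f b = (\<Sum>a\<in>{a. c a \<noteq> 0}. c a * P a b)" and z: "f b \<noteq> 0"
  shows "\<exists>a. c a \<noteq> 0 \<and> P a b \<noteq> 0"
proof (rule ccontr)
  assume "\<not> ?thesis"
  then have "\<forall>a\<in>{a. c a \<noteq> 0}. c a * P a b = 0" by auto
  then have "f b = 0" using fb by simp
  then show False using z by simp
qed

lemma pc_le:
  fixes P :: "nat list \<Rightarrow> nat list \<Rightarrow> int" and c :: "nat list \<Rightarrow> int"
  assumes nn: "\<And>a b. P a b \<ge> 0" and fin: "finite {a. c a \<noteq> 0}" and cn: "\<forall>a. c a \<ge> 0"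
    and fb: "f b = (\<Sum>a\<in>{a. c a \<noteq> 0}. c a * P a b)" and ca: "c a \<noteq> 0"
  shows "c a * P a b \<le> f b"
proof -
  have "c a * P a b \<le> (\<Sum>a\<in>{a. c a \<noteq> 0}. c a * P a b)"
    by (rule member_le_sum) (use ca fin cn nn in auto)
  then show ?thesis using fb by simp
qed

lemma nn_mono: "monoslide a b \<ge> 0" by (simp add: monoslide_def)
lemma nn_fund: "fundslide a b \<ge> 0" by (simp add: fundslide_def)
lemma nn_part: "particle a b \<ge> 0" by (simp add: particle_def)
lemma nn_atom: "atom a b \<ge> 0" by (simp add: atom_def)

lemma all_le2: "(\<forall>i\<le>(2::nat). P i) \<longleftrightarrow> P 0 \<and> P 1 \<and> P 2"
  by (auto simp: numeral_2_eq_2 le_Suc_eq)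

lemma len2: "length a = 2 \<Longrightarrow> \<exists>x y. a = [x, y]"
  by (auto simp: numeral_2_eq_2 length_Suc_conv)

lemma af_zero: "atom_filling a S \<Longrightarrow> x \<notin> diag a \<Longrightarrow> S x = 0"
  unfolding atom_filling_def by (drule conjunct1) blast

lemma af_row: "atom_filling a S \<Longrightarrow> (r, c) \<in> diag a \<Longrightarrow> (r, Suc c) \<in> diag a \<Longrightarrow> S (r, Suc c) \<le> S (r, c)"
  unfolding atom_filling_def by (drule conjunct2, drule conjunct2, drule conjunct1) blast

lemma af_first: "atom_filling a S \<Longrightarrow> 1 \<le> i \<Longrightarrow> i \<le> length a \<Longrightarrow> a ! (i - 1) \<noteq> 0 \<Longrightarrow> S (i, 1) = i"
  unfolding atom_filling_def
  by (drule conjunct2, drule conjunct2, drule conjunct2, drule conjunct2, drule conjunct2, drule conjunct2) blast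

lemma atom_bound:
  assumes A: "atom_filling a S" and d: "(r, c) \<in> diag a"
  shows "S (r, c) \<le> r"
  using d
proof (induction c)
  case 0 then show ?case by (simp add: diag_def)
next
  case (Suc c)
  show ?case
  proof (cases c)
    case 0
    then have "a ! (r - 1) \<noteq> 0" "1 \<le> r" "r \<le> length a" using Suc.prems by (auto simp: diag_def)
    then show ?thesis using af_first[OF A] 0 by simp
  next
    case (Suc k)
    have dc: "(r, c) \<in> diag a" using Suc.prems Suc by (auto simp: diag_def)
    then have "S (r, c) \<ge> S (r, Suc c)" using af_row[OF A dc] Suc.prems by simp
    with Suc.IH[OF dc] show ?thesis by simp
  qed
qed

lemma finite_diag: "finite (diag a)"
proof -
  have "diag a \<subseteq> {..length a} \<times> {..sum_list a}"
  proof
    fix x assume "x \<in> diag a"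
    then obtain r c where x: "x = (r, c)" "1 \<le> r" "r \<le> length a" "c \<le> a ! (r - 1)"
      by (auto simp: diag_def)
    then have "a ! (r - 1) \<in> set a" by (intro nth_mem) simp
    then have "a ! (r - 1) \<le> sum_list a" by (simp add: member_le_sum_list)
    then show "x \<in> {..length a} \<times> {..sum_list a}" using x by auto
  qed
  then show ?thesis by (rule finite_subset) auto
qed

lemma finite_fillings: "finite {S. atom_filling a S \<and> Q S}"
proof -
  have "{S. atom_filling a S \<and> Q S} \<subseteq>
     {f. \<forall>x. (x \<in> diag a \<longrightarrow> f x \<in> {..length a}) \<and> (x \<notin> diag a \<longrightarrow> f x = 0)}"
  proof (intro subsetI CollectI allI conjI impI)
    fix S x assume "S \<in> {S. atom_filling a S \<and> Q S}"
    then have A: "atom_filling a S" by simp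
    { assume "x \<in> diag a"
      then obtain r c where "x = (r, c)" "r \<le> length a" by (cases x) (auto simp: diag_def)
      then show "S x \<in> {..length a}" using atom_bound[OF A] \<open>x \<in> diag a\<close> by fastforce }
    { assume "x \<notin> diag a" then show "S x = 0" using af_zero[OF A] by simp }
  qed
  then show ?thesis
    by (rule finite_subset) (intro finite_set_of_finite_funs finite_diag, simp)
qed

lemma atom_pos:
  assumes "atom_filling a S" "\<forall>i. 1 \<le> i \<and> i \<le> length a \<longrightarrow> card {x \<in> diag a. S x = i} = b ! (i - 1)"
    "length b = length a"
  shows "atom a b \<ge> 1"
proof -
  let ?X = "{S. atom_filling a S \<and>
                   (\<forall>i. 1 \<le> i \<and> i \<le> length a \<longrightarrow> card {x \<in> diag a. S x = i} = b ! (i - 1))}"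
  have "S \<in> ?X" using assms by auto
  moreover have "finite ?X" by (rule finite_fillings)
  ultimately have "card ?X \<noteq> 0" by (auto simp: card_eq_0_iff)
  then show ?thesis using assms(3) by (simp add: atom_def)
qed

definition S0 :: "nat list \<Rightarrow> nat \<times> nat \<Rightarrow> nat" where
  "S0 a x = (if x \<in> diag a then fst x else 0)"

lemma atom_self: "atom a a \<ge> 1"
proof (rule atom_pos[of a "S0 a"])
  show "atom_filling a (S0 a)"
    unfolding atom_filling_def S0_def inv_triple_def by (auto simp: diag_def)
  show "\<forall>i. 1 \<le> i \<and> i \<le> length a \<longrightarrow> card {x \<in> diag a. S0 a x = i} = a ! (i - 1)"
  proof safe
    fix i assume i: "1 \<le> i" "i \<le> length a"
    have "{x \<in> diag a. S0 a x = i} = {i} \<times> {1..a ! (i - 1)}"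
      using i by (auto simp: S0_def diag_def)
    then show "card {x \<in> diag a. S0 a x = i} = a ! (i - 1)" by simp
  qed
qed simp

lemma diag01: "diag [0, 1] = {(2, 1)}"
  by (auto simp: diag_def nth_Cons' split: if_splits)

lemma atom01_10: "atom [0, 1] [1, 0] = 0"
proof -
  have "{S. atom_filling [0, 1] S \<and>
          (\<forall>i. 1 \<le> i \<and> i \<le> length [0::nat, 1] \<longrightarrow> card {x \<in> diag [0, 1]. S x = i} = [1::nat, 0] ! (i - 1))} = {}"
  proof (rule ccontr)
    assume "\<not> ?thesis"
    then obtain S where A: "atom_filling [0, 1] S"
      and C: "\<forall>i. 1 \<le> i \<and> i \<le> length [0::nat, 1] \<longrightarrow> card {x \<in> diag [0, 1]. S x = i} = [1::nat, 0] ! (i - 1)"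
      by blast
    have "S (2, 1) = 2" using af_first[OF A, of 2] by simp
    then have e: "{x \<in> diag [0, 1]. S x = 1} = {}" unfolding diag01 by auto
    have "card {x \<in> diag [0, 1]. S x = 1} = 1" using C[rule_format, of 1] by simp
    then show False unfolding e by simp
  qed
  then show ?thesis by (subst atom_def) (simp only: card.empty, simp)
qed

lemma refines_single: "refines [x] d \<Longrightarrow> d = [x]"
  unfolding refines_def
proof (elim exE conjE)
  fix cs assume h: "[x] = concat cs" "map sum_list cs = d" "\<forall>x\<in>set cs. x \<noteq> []"
  have "cs = [[x]]"
  proof (cases cs)
    case Nil then show ?thesis using h by simp
  next
    case (Cons c1 rest)
    then have "c1 \<noteq> []" "\<forall>x\<in>set rest. x \<noteq> []" using h by auto
    moreover have "[x] = c1 @ concat rest" using h Cons by simp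
    ultimately have "c1 = [x] \<and> concat rest = []"
      by (cases c1) auto
    then have "rest = []" using \<open>\<forall>x\<in>set rest. x \<noteq> []\<close> by (cases rest) auto
    then show ?thesis using Cons \<open>c1 = [x] \<and> concat rest = []\<close> by simp
  qed
  then show "d = [x]" using h(2) by simp
qed

lemma refines_refl1: "refines [x] [x]"
  unfolding refines_def by (rule exI[of _ "[[x]]"]) simp

lemma sl_concat: "sum_list (concat xss) = sum_list (map sum_list (xss :: nat list list))"
  by (induct xss) auto

lemma refines_sum: "refines c d \<Longrightarrow> sum_list c = sum_list d"
  unfolding refines_def by (auto simp: sl_concat)

lemma refines_head: "refines (x # xs) (e # es) \<Longrightarrow> x \<le> e"
  unfolding refines_def
proof (elim exE conjE)
  fix cs assume h: "x # xs = concat cs" "map sum_list cs = e # es" "\<forall>x\<in>set cs. x \<noteq> []"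
  then obtain c1 rest where cs: "cs = c1 # rest" by (cases cs) auto
  then have "c1 \<noteq> []" "e = sum_list c1" using h by auto
  then obtain c1' where "c1 = x # c1'" using h cs by (cases c1) auto
  then show "x \<le> e" using \<open>e = sum_list c1\<close> by simp
qed

lemma dom2: "dom_ge b [x, y] \<longleftrightarrow> (\<exists>u v. b = [u, v] \<and> x \<le> u \<and> x + y \<le> u + v)"
proof
  assume "dom_ge b [x, y]"
  then have L: "length b = 2" and D: "\<forall>i\<le>2. sum_list (take i b) \<ge> sum_list (take i [x, y])"
    unfolding dom_ge_def by auto
  obtain u v where b: "b = [u, v]" using len2[OF L] by blast
  show "\<exists>u v. b = [u, v] \<and> x \<le> u \<and> x + y \<le> u + v"
    using D[rule_format, of 1] D[rule_format, of 2] b by auto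
next
  assume "\<exists>u v. b = [u, v] \<and> x \<le> u \<and> x + y \<le> u + v"
  then show "dom_ge b [x, y]" unfolding dom_ge_def by (auto simp: le_Suc_eq numeral_2_eq_2)
qed

lemma domgeL: "dom_ge b a \<Longrightarrow> length b = length a"
  unfolding dom_ge_def by simp

lemma Y01:
  assumes "Y = monoslide \<or> Y = fundslide" "Y a [0, 1] \<noteq> 0"
  shows "Y a [1, 0] \<noteq> 0"
proof -
  have d: "dom_ge [0, 1] a" using assms by (auto simp: monoslide_def fundslide_def split: if_splits)
  then have "length a = 2" using domgeL by fastforce
  then obtain x y where a: "a = [x, y]" using len2 by blast
  then have "x = 0" "y \<le> 1" using d by (auto simp: dom2)
  moreover have "flat a = [1]"
    using assms by (auto simp: monoslide_def fundslide_def flat_def split: if_splits dest: refines_single)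
  ultimately have "a = [0, 1]" using a by (cases y) (auto simp: flat_def split: if_splits)
  then show ?thesis using assms by (auto simp: monoslide_def fundslide_def dom2 flat_def refines_refl1)
qed

lemma fs01: "b \<in> fixed_slides a \<Longrightarrow> a = [0, 1] \<Longrightarrow> b = [0, 1]"
proof (induction rule: fixed_slides.induct)
  case refl then show ?case by simp
next
  case (move b p i j)
  then have b: "b = [0, 1]" by simp
  then have p: "p = 0" using move by simp
  have "i + j = 1" using move b p by simp
  moreover have "a ! Suc p \<noteq> 0" using move.prems p by simp
  then have "j > 0" using move by blast
  ultimately have "i = 0" "j = 1" by auto
  then show ?case using b p by simp
qed

lemma part01_10: "particle [0, 1] [1, 0] = 0"
  using fs01[of "[1, 0]" "[0, 1]"] by (auto simp: particle_def)

lemma part01_01: "particle [0, 1] [0, 1] = 1"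
  by (simp add: particle_def fixed_slides.refl)

lemma X01:
  fixes Y X :: "nat list \<Rightarrow> nat list \<Rightarrow> int"
  assumes Y: "Y = monoslide \<or> Y = fundslide"
    and fz: "X [0, 1] [1, 0] = 0" and fn: "X [0, 1] [0, 1] \<noteq> 0"
  shows "\<not> pos_comb 2 Y (X [0, 1])"
proof
  assume "pos_comb 2 Y (X [0, 1])"
  then obtain c where c: "finite {a. c a \<noteq> 0}" "\<forall>a. c a \<ge> 0"
    "\<forall>b. X [0, 1] b = (\<Sum>a\<in>{a. c a \<noteq> 0}. c a * Y a b)"
    by (rule pc_unfold) blast
  have nn: "\<And>a b. Y a b \<ge> 0" using Y nn_mono nn_fund by auto
  obtain a where a: "c a \<noteq> 0" "Y a [0, 1] \<noteq> 0" using pc_nz[where f="X [0, 1]" and b="[0, 1]" and c=c and P=Y, OF c(3)[rule_format] fn] by blast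
  have "Y a [1, 0] = 0" using pc_zero[where f="X [0, 1]" and b="[1, 0]" and c=c and P=Y and a=a, OF nn c(1) c(2) c(3)[rule_format] fz a(1)] .
  then show False using Y01[OF Y a(2)] by simp
qed


lemma Y13:
  assumes "Y = monoslide \<or> Y = fundslide" "Y [1, 3] b \<noteq> 0"
  shows "b = [1, 3]"
proof -
  have d: "dom_ge b [1, 3]" using assms by (auto simp: monoslide_def fundslide_def split: if_splits)
  then obtain u v where b: "b = [u, v]" "1 \<le> u" "4 \<le> u + v" by (auto simp: dom2)
  have fl: "flat b = u # (if v = 0 then [] else [v])" using b by (simp add: flat_def)
  show ?thesis
  proof (cases "Y = monoslide")
    case True
    then have "flat b = [1, 3]" using assms by (auto simp: monoslide_def flat_def split: if_splits)
    then show ?thesis using fl b by (auto split: if_splits)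
  next
    case False
    then have "refines (flat b) [1, 3]" using assms by (auto simp: fundslide_def flat_def split: if_splits)
    then have "u \<le> 1" "sum_list (flat b) = 4" using refines_head refines_sum fl by fastforce+
    then show ?thesis using fl b by (auto split: if_splits)
  qed
qed

lemma Y13_self: "Y = monoslide \<or> Y = fundslide \<Longrightarrow> Y [1, 3] [1, 3] = 1"
proof -
  have r: "refines [1, 3] [1, 3]" unfolding refines_def by (rule exI[of _ "[[1], [3]]"]) simp
  assume "Y = monoslide \<or> Y = fundslide"
  then show ?thesis using r by (auto simp: monoslide_def fundslide_def dom2 flat_def)
qed

definition S1 :: "nat \<times> nat \<Rightarrow> nat" where
  "S1 x = (if x \<in> diag [1, 3] then (if x = (1, 1) \<or> x = (2, 3) then 1 else 2) else 0)"

lemma diag13: "diag [1, 3] = {(1, 1), (2, 1), (2, 2), (2, 3)}"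
  by (auto simp: diag_def nth_Cons' split: if_splits)

lemma atom13_22: "atom [1, 3] [2, 2] \<ge> 1"
proof (rule atom_pos[of _ S1])
  show "atom_filling [1, 3] S1"
    unfolding atom_filling_def S1_def inv_triple_def diag13 by auto
  have e1: "{x \<in> diag [1, 3]. S1 x = 1} = {(1, 1), (2, 3)}" unfolding S1_def diag13 by auto
  have e2: "{x \<in> diag [1, 3]. S1 x = 2} = {(2, 1), (2, 2)}" unfolding S1_def diag13 by auto
  show "\<forall>i. 1 \<le> i \<and> i \<le> length [1::nat, 3] \<longrightarrow> card {x \<in> diag [1, 3]. S1 x = i} = [2::nat, 2] ! (i - 1)"
  proof (intro allI impI)
    fix i :: nat assume "1 \<le> i \<and> i \<le> length [1::nat, 3]"
    then have "i = 1 \<or> i = 2" by auto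
    then show "card {x \<in> diag [1, 3]. S1 x = i} = [2::nat, 2] ! (i - 1)" using e1 e2 by auto
  qed
qed simp

lemma Z13:
  fixes Y :: "nat list \<Rightarrow> nat list \<Rightarrow> int"
  assumes Y: "Y = monoslide \<or> Y = fundslide"
  shows "\<not> pos_comb 2 atom (Y [1, 3])"
proof
  assume "pos_comb 2 atom (Y [1, 3])"
  then obtain c where c: "finite {a. c a \<noteq> 0}" "\<forall>a. c a \<ge> 0"
    "\<forall>b. Y [1, 3] b = (\<Sum>a\<in>{a. c a \<noteq> 0}. c a * atom a b)"
    by (rule pc_unfold) blast
  have fn: "Y [1, 3] [1, 3] \<noteq> 0" using Y13_self[OF Y] by simp
  obtain a where a: "c a \<noteq> 0" "atom a [1, 3] \<noteq> 0" using pc_nz[where f="Y [1, 3]" and b="[1, 3]" and c=c and P=atom, OF c(3)[rule_format] fn] by blast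
  have "c a * atom a a \<le> Y [1, 3] a" using pc_le[where f="Y [1, 3]" and b=a and c=c and P=atom and a=a, OF nn_atom c(1) c(2) c(3)[rule_format] a(1)] .
  moreover have c1: "c a \<ge> 1" using a(1) c(2) by (metis int_one_le_iff_zero_less order_le_less)
  moreover have a1: "atom a a \<ge> 1" by (rule atom_self)
  moreover have "1 * 1 \<le> c a * atom a a" using mult_mono[OF c1 a1] c1 by simp
  ultimately have "Y [1, 3] a \<ge> 1" by simp
  then have aa: "a = [1, 3]" using Y13[OF Y] by fastforce
  have fz: "Y [1, 3] [2, 2] = 0" using Y13[OF Y, of "[2, 2]"] by auto
  have "atom [1, 3] [2, 2] = 0" using pc_zero[where f="Y [1, 3]" and b="[2, 2]" and c=c and P=atom and a=a, OF nn_atom c(1) c(2) c(3)[rule_format] fz a(1)] aa by simp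
  then show False using atom13_22 by simp
qed

lemma fs2: "b \<in> fixed_slides a \<Longrightarrow> length a = 2 \<Longrightarrow>
   length b = 2 \<and> b ! 0 + b ! 1 = a ! 0 + a ! 1 \<and> a ! 0 \<le> b ! 0"
proof (induction rule: fixed_slides.induct)
  case refl then show ?case by simp
next
  case (move b p i j)
  then have "p = 0" by simp
  then show ?case using move by auto
qed

lemma W02: "\<not> pos_comb 2 particle (monoslide [0, 2])"
proof
  assume "pos_comb 2 particle (monoslide [0, 2])"
  then obtain c where c: "finite {a. c a \<noteq> 0}" "\<forall>a. c a \<ge> 0" "\<forall>a. c a \<noteq> 0 \<longrightarrow> length a = 2"
    "\<forall>b. monoslide [0, 2] b = (\<Sum>a\<in>{a. c a \<noteq> 0}. c a * particle a b)"
    by (rule pc_unfold) blast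
  have fn: "monoslide [0, 2] [0, 2] \<noteq> 0" by (simp add: monoslide_def dom2)
  obtain a where a: "c a \<noteq> 0" "particle a [0, 2] \<noteq> 0" using pc_nz[where f="monoslide [0, 2]" and b="[0, 2]" and c=c and P=particle, OF c(4)[rule_format] fn] by blast
  have L: "length a = 2" using c(3) a(1) by blast
  then obtain x y where xy: "a = [x, y]" using len2 by blast
  have "[0, 2] \<in> fixed_slides a" using a(2) by (simp add: particle_def split: if_splits)
  from fs2[OF this L] have aa: "a = [0, 2]" using xy by simp
  have fz: "monoslide [0, 2] [1, 1] = 0" by (simp add: monoslide_def flat_def)
  have "particle [0, 2] [1, 1] = 0" using pc_zero[where f="monoslide [0, 2]" and b="[1, 1]" and c=c and P=particle and a=a, OF nn_part c(1) c(2) c(4)[rule_format] fz a(1)] aa by simp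
  moreover have "[1, 1] \<in> fixed_slides [0, 2]"
  proof -
    have "[0, 2][0 := 1, Suc 0 := 1] \<in> fixed_slides [0, 2]"
      by (rule fixed_slides.move[where i=1 and j=1]) (auto intro: fixed_slides.refl)
    then show ?thesis by simp
  qed
  ultimately show False by (simp add: particle_def)
qed

theorem proposition4p9:
  shows "mutually_nonpositive atom monoslide \<and> mutually_nonpositive atom fundslide \<and>
         mutually_nonpositive particle monoslide"
proof -
  have a01: "atom [0, 1] [0, 1] \<noteq> 0" using atom_self[of "[0, 1]"] by simp
  have A1: "\<not> pos_comb (length [0::nat, 1]) monoslide (atom [0, 1])"
    using X01[of monoslide atom] a01 atom01_10 by (simp add: numeral_2_eq_2)
  have A2: "\<not> pos_comb (length [0::nat, 1]) fundslide (atom [0, 1])"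
    using X01[of fundslide atom] a01 atom01_10 by (simp add: numeral_2_eq_2)
  have A3: "\<not> pos_comb (length [0::nat, 1]) monoslide (particle [0, 1])"
    using X01[of monoslide particle] part01_01 part01_10 by (simp add: numeral_2_eq_2)
  have B1: "\<not> pos_comb (length [1::nat, 3]) atom (monoslide [1, 3])"
    using Z13[of monoslide] by (simp add: numeral_2_eq_2)
  have B2: "\<not> pos_comb (length [1::nat, 3]) atom (fundslide [1, 3])"
    using Z13[of fundslide] by (simp add: numeral_2_eq_2)
  have B3: "\<not> pos_comb (length [0::nat, 2]) particle (monoslide [0, 2])"
    using W02 by (simp add: numeral_2_eq_2)
  show ?thesis unfolding mutually_nonpositive_def using A1 A2 A3 B1 B2 B3 by blast
qed

end
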